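(* Let $\mathcal{B}$ be a $\sigma$-algebra on a nonempty set $E$ and let $\nu$ be a $\sigma$-principal $\sigma$-maxitive measure on $\mathcal{B}$. Then $\nu$ is autocontinuous. Moreover, if the empty set is the only $\nu$-negligible subset of $E$, then $\nu$ is completely maxitive and has a cardinal density (a map $c:E\to[0,\infty]$ with $\nu(B)=\sup_{x\in B}c(x)$ for all $B\in\mathcal{B}$).
   Context: A $\sigma$-maxitive measure on $\mathcal{B}$ is a map $\nu:\mathcal{B}\to[0,\infty]$ with $\nu(\emptyset)=0$, $\nu(B\cup B')=\max(\nu(B),\nu(B'))$, and $\nu(\bigcup_nB_n)=\lim_n\nu(B_n)$ for nondecreasing sequences in $\mathcal{B}$. It is completely maxitive if $\nu(\bigcup_{j\in J}B_j)=\sup_{j\in J}\nu(B_j)$ for every arbitrary family $(B_j)_{j\in J}$ in $\mathcal{B}$ with $\bigcup_jB_j\in\mathcal{B}$. A subset $N\subset E$ is $\nu$-negligible if $N\subset G$ for some $G\in\mathcal{B}$ with $\nu(G)=0$. A $\sigma$-ideal of $\mathcal{B}$ is a nonempty $\mathcal{I}\subset\mathcal{B}$ closed under countable unions and under taking subsets belonging to $\mathcal{B}$; $\nu$ is $\sigma$-principal if for every $\sigma$-ideal $\mathcal{I}$ there is $L\in\mathcal{I}$ with $S\setminus L$ $\nu$-negligible for all $S\in\mathcal{I}$. $\nu$ is autocontinuous if there is a $\mathcal{B}$-measurable $f:E\to[0,\infty]$ (i.e. $\{f>t\}\in\mathcal{B}$ for all $t\ge0$) with $\nu(B)=\inf\{t>0:B\cap\{f>t\}\text{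 is }\nu\text{-negligible}\}$ for all $B\in\mathcal{B}$. *)

theory Defs
  imports "HOL-Analysis.Analysis"
begin

text \<open>Maps nu : B -> [0,infinity] are modelled as functions 'a set => ennreal,
  only their values on B matter.\<close>

definition sigma_maxitive :: "'a set set \<Rightarrow> ('a set \<Rightarrow> ennreal) \<Rightarrow> bool" where
  "sigma_maxitive B \<nu> \<longleftrightarrow>
     \<nu> {} = 0 \<and>
     (\<forall>A\<in>B. \<forall>A'\<in>B. \<nu> (A \<union> A') = max (\<nu> A) (\<nu> A')) \<and>
     (\<forall>S :: nat \<Rightarrow> 'a set. range S \<subseteq> B \<longrightarrow> incseq S \<longrightarrow>
        (\<lambda>n. \<nu> (S n)) \<longlonglongrightarrow> \<nu> (\<Union>n. S n))"

definition completely_maxitive :: "'a set set \<Rightarrow> ('a set \<Rightarrow> ennreal) \<Rightarrow> bool" where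
  "completely_maxitive B \<nu> \<longleftrightarrow>
     (\<forall>F. F \<subseteq> B \<longrightarrow> \<Union>F \<in> B \<longrightarrow> \<nu> (\<Union>F) = (SUP A\<in>F. \<nu> A))"

definition negligible_set :: "'a set \<Rightarrow> 'a set set \<Rightarrow> ('a set \<Rightarrow> ennreal) \<Rightarrow> 'a set \<Rightarrow> bool" where
  "negligible_set E B \<nu> N \<longleftrightarrow> N \<subseteq> E \<and> (\<exists>G\<in>B. N \<subseteq> G \<and> \<nu> G = 0)"

definition sigma_ideal :: "'a set set \<Rightarrow> 'a set set \<Rightarrow> bool" where
  "sigma_ideal B I \<longleftrightarrow> I \<noteq> {} \<and> I \<subseteq> B \<and>
     (\<forall>S :: nat \<Rightarrow> 'a set. range S \<subseteq> I \<longrightarrow> (\<Union>n. S n) \<in> I) \<and>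
     (\<forall>A\<in>I. \<forall>C\<in>B. C \<subseteq> A \<longrightarrow> C \<in> I)"

definition sigma_principal :: "'a set \<Rightarrow> 'a set set \<Rightarrow> ('a set \<Rightarrow> ennreal) \<Rightarrow> bool" where
  "sigma_principal E B \<nu> \<longleftrightarrow>
     (\<forall>I. sigma_ideal B I \<longrightarrow> (\<exists>L\<in>I. \<forall>S\<in>I. negligible_set E B \<nu> (S - L)))"

definition autocontinuous :: "'a set \<Rightarrow> 'a set set \<Rightarrow> ('a set \<Rightarrow> ennreal) \<Rightarrow> bool" where
  "autocontinuous E B \<nu> \<longleftrightarrow>
     (\<exists>f :: 'a \<Rightarrow> ennreal. (\<forall>t. {x\<in>E. f x > t} \<in> B) \<and>
        (\<forall>A\<in>B. \<nu> A = Inf {t. t > 0 \<and> negligible_set E B \<nu> (A \<inter> {x\<in>E. f x > t})}))"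

definition has_cardinal_density :: "'a set \<Rightarrow> 'a set set \<Rightarrow> ('a set \<Rightarrow> ennreal) \<Rightarrow> bool" where
  "has_cardinal_density E B \<nu> \<longleftrightarrow>
     (\<exists>c :: 'a \<Rightarrow> ennreal. \<forall>A\<in>B. \<nu> A = (SUP x\<in>A. c x))"

end

theory Submission
  imports Defs
begin


lemma nu_mono:
  assumes "sigma_maxitive B \<nu>" "A \<in> B" "C \<in> B" "A \<subseteq> C"
  shows "\<nu> A \<le> \<nu> C"
proof -
  have "\<nu> (A \<union> C) = max (\<nu> A) (\<nu> C)" using assms unfolding sigma_maxitive_def by blast
  moreover have "A \<union> C = C" using assms by blast
  ultimately show ?thesis by (metis max.cobounded1)
qed

lemma nu_max:
  assumes "sigma_maxitive B \<nu>" "A \<in> B" "C \<in> B"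
  shows "\<nu> (A \<union> C) = max (\<nu> A) (\<nu> C)"
  using assms unfolding sigma_maxitive_def by blast

lemma nu_countable_bound:
  assumes sm: "sigma_maxitive B \<nu>" and sa: "sigma_algebra E B"
    and S: "range (S::nat \<Rightarrow> _) \<subseteq> B" and b: "\<And>n. \<nu> (S n) \<le> t"
  shows "\<nu> (\<Union>n. S n) \<le> t"
proof -
  interpret sigma_algebra E B by fact
  define T where "T n = (\<Union>i\<le>n. S i)" for n
  have TB: "T n \<in> B" for n unfolding T_def using S by (intro finite_UN) auto
  have inc: "incseq T" unfolding T_def incseq_def by (auto intro: order_trans)
  have Tb: "\<nu> (T n) \<le> t" for n
  proof (induction n)
    case 0 then show ?case using b by (simp add: T_def)
  next
    case (Suc n)
    have "T (Suc n) = T n \<union> S (Suc n)" unfolding T_def by (simp add: atMost_Suc Un_commute)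
    then have "\<nu> (T (Suc n)) = max (\<nu> (T n)) (\<nu> (S (Suc n)))"
      using nu_max[OF sm TB, of "S (Suc n)"] S by (metis rangeI subsetD)
    then show ?case using Suc b by simp
  qed
  have U: "(\<Union>n. T n) = (\<Union>n. S n)" unfolding T_def by auto
  have "(\<lambda>n. \<nu> (T n)) \<longlonglongrightarrow> \<nu> (\<Union>n. T n)"
    using sm TB inc unfolding sigma_maxitive_def by blast
  then show ?thesis using Tb U by (metis LIMSEQ_le_const2)
qed

lemma dens:
  fixes a b :: ennreal
  assumes q: "range q = {r. r \<in> \<rat> \<and> 0 < r}"
    and h: "\<And>n. a < ennreal (q n) \<Longrightarrow> b \<le> ennreal (q n)"
  shows "b \<le> a"
proof (rule ccontr)
  assume "\<not> b \<le> a"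
  then have ab: "a < b" by simp
  then obtain y where y: "a < y" "y < b" using dense by blast
  have yt: "y \<noteq> top" using y(2) by (metis less_le_not_le top_greatest)
  obtain y' where y': "y = ennreal y'" "0 \<le> y'" using ennreal_cases[of y] yt by blast
  have at: "a \<noteq> top" using y(1) by (metis less_le_not_le top_greatest)
  obtain a' where a': "a = ennreal a'" "0 \<le> a'" using ennreal_cases[of a] at by blast
  have "a' < y'" using y a' y' by (simp add: ennreal_less_iff)
  then obtain r where r: "r \<in> \<rat>" "a' < r" "r < y'" using Rats_dense_in_real by blast
  then have "r \<in> range q" using q a' by auto
  then obtain n where n: "q n = r" by auto
  have "a < ennreal (q n)" using n r a' by (simp add: ennreal_less_iff)
  then have "b \<le> ennreal (q n)" by (rule h)
  also have "\<dots> < y" using n r y' a' by (simp add: ennreal_less_iff)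
  finally show False using y(2) by (metis less_le_not_le)
qed


lemma negl_subset:
  assumes "negligible_set E B \<nu> N" "M \<subseteq> N"
  shows "negligible_set E B \<nu> M"
  using assms unfolding negligible_set_def by blast

theorem corollary5p7:
  fixes E :: "'a set" and B :: "'a set set" and \<nu> :: "'a set \<Rightarrow> ennreal"
  assumes "E \<noteq> {}"
    and "sigma_algebra E B"
    and "sigma_maxitive B \<nu>"
    and "sigma_principal E B \<nu>"
  shows "autocontinuous E B \<nu> \<and>
         ((\<forall>N. negligible_set E B \<nu> N \<longrightarrow> N = {}) \<longrightarrow>
            completely_maxitive B \<nu> \<and> has_cardinal_density E B \<nu>)"
proof -
  interpret sa: sigma_algebra E B by fact
  have sm: "sigma_maxitive B \<nu>" by fact
  have nu0: "\<nu> {} = 0" using sm unfolding sigma_maxitive_def by blast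
  define Qp where "Qp = {r::real. r \<in> \<rat> \<and> 0 < r}"
  have Qne: "Qp \<noteq> {}" unfolding Qp_def by (metis (mono_tags, lifting) Rats_1 empty_iff mem_Collect_eq zero_less_one)
  have Qc: "countable Qp" unfolding Qp_def by (rule countable_subset[OF _ countable_rat]) blast
  define q where "q = from_nat_into Qp"
  have q: "range q = {r. r \<in> \<rat> \<and> 0 < r}" unfolding q_def using Qne Qc by (simp add: Qp_def)
  have qpos: "0 < q n" for n using q by (metis (mono_tags, lifting) mem_Collect_eq rangeI)
  define I where "I t = {A\<in>B. \<nu> A \<le> t}" for t
  have sI: "sigma_ideal B (I t)" for t
    unfolding sigma_ideal_def
  proof (intro conjI ballI allI impI)
    have "{} \<in> I t" unfolding I_def using nu0 by simp
    then show "I t \<noteq> {}" by auto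
    show "I t \<subseteq> B" unfolding I_def by (rule Collect_subset)
  next
    fix S :: "nat \<Rightarrow> 'a set" assume S: "range S \<subseteq> I t"
    then have SB: "range S \<subseteq> B" unfolding I_def by blast
    have "\<nu> (S n) \<le> t" for n using S unfolding I_def by blast
    then have "\<nu> (\<Union>n. S n) \<le> t" by (rule nu_countable_bound[OF sm assms(2) SB])
    then show "(\<Union>n. S n) \<in> I t" unfolding I_def using SB by blast
  next
    fix A C assume "A \<in> I t" "C \<in> B" "C \<subseteq> A"
    then have "C \<in> B" "A \<in> B" "\<nu> A \<le> t" "C \<subseteq> A" unfolding I_def by auto
    then have "\<nu> C \<le> t" using nu_mono[OF sm, of C A] by (meson order_trans)
    then show "C \<in> I t" unfolding I_def using \<open>C \<in> B\<close> by blast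
  qed
  have ex: "\<forall>n. \<exists>L. L \<in> I (ennreal (q n)) \<and> (\<forall>S\<in>I (ennreal (q n)). negligible_set E B \<nu> (S - L))"
    using assms(4) sI unfolding sigma_principal_def by blast
  obtain L where L0: "\<forall>n. L n \<in> I (ennreal (q n)) \<and> (\<forall>S\<in>I (ennreal (q n)). negligible_set E B \<nu> (S - L n))"
    using choice[OF ex] by blast
  have L: "\<And>n. L n \<in> I (ennreal (q n))"
      "\<And>n S. S \<in> I (ennreal (q n)) \<Longrightarrow> negligible_set E B \<nu> (S - L n)"
    using L0 by blast+
  have LB: "L n \<in> B" and Lnu: "\<nu> (L n) \<le> ennreal (q n)" for n using L(1)[of n] unfolding I_def by auto
  define L' where "L' n = (\<Union>m. if q m \<le> q n then L m else {})" for n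
  have L'B: "L' n \<in> B" for n unfolding L'_def using LB by (intro sa.countable_nat_UN) auto
  have L'nu: "\<nu> (L' n) \<le> ennreal (q n)" for n
    unfolding L'_def
  proof (rule nu_countable_bound[OF sm assms(2)])
    show "range (\<lambda>m. if q m \<le> q n then L m else {}) \<subseteq> B" using LB by auto
    fix m show "\<nu> (if q m \<le> q n then L m else {}) \<le> ennreal (q n)"
    proof (cases "q m \<le> q n")
      case True
      then have "ennreal (q m) \<le> ennreal (q n)" by (rule ennreal_leI)
      then show ?thesis using True Lnu[of m] by simp
    qed (simp add: nu0)
  qed
  have L'mono: "q m \<le> q n \<Longrightarrow> L' m \<subseteq> L' n" for m n
    unfolding L'_def by (auto split: if_splits intro: order_trans)
  have LL': "L n \<subseteq> L' n" for n unfolding L'_def by auto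
  have negL': "negligible_set E B \<nu> (S - L' n)" if "S \<in> B" "\<nu> S \<le> ennreal (q n)" for S n
  proof -
    have "S \<in> I (ennreal (q n))" using that unfolding I_def by blast
    then have "negligible_set E B \<nu> (S - L n)" by (rule L(2))
    then show ?thesis by (rule negl_subset) (use LL'[of n] in blast)
  qed
  define f where "f x = Inf {ennreal (q n) | n. x \<in> L' n}" for x
  have fle: "f x \<le> ennreal (q n)" if "x \<in> L' n" for x n
    unfolding f_def using that by (auto intro: Inf_lower)
  have fless: "x \<in> L' n" if fx: "f x < ennreal (q n)" for x n
  proof -
    obtain m where m: "x \<in> L' m" "ennreal (q m) < ennreal (q n)"
      using fx unfolding f_def Inf_less_iff by blast
    then have "q m < q n" using qpos[of m] by (simp add: ennreal_less_iff)
    then show ?thesis using L'mono[of m n] m by auto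
  qed
  have fmeas: "{x\<in>E. t < f x} \<in> B" for t
  proof -
    have eq: "{x\<in>E. t < f x} = {x\<in>E. \<exists>n. t < ennreal (q n) \<and> x \<notin> L' n}"
    proof (intro set_eqI iffI)
      fix x assume x: "x \<in> {x\<in>E. t < f x}"
      show "x \<in> {x\<in>E. \<exists>n. t < ennreal (q n) \<and> x \<notin> L' n}"
      proof (rule ccontr)
        assume "x \<notin> {x\<in>E. \<exists>n. t < ennreal (q n) \<and> x \<notin> L' n}"
        then have "\<And>n. t < ennreal (q n) \<Longrightarrow> f x \<le> ennreal (q n)" using x fle by blast
        then have "f x \<le> t" by (rule dens[OF q])
        then show False using x by (simp add: not_less[symmetric])
      qed
    next
      fix x assume x: "x \<in> {x\<in>E. \<exists>n. t < ennreal (q n) \<and> x \<notin> L' n}"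
      then obtain n where n: "x \<in> E" "t < ennreal (q n)" "x \<notin> L' n" by blast
      show "x \<in> {x\<in>E. t < f x}"
      proof (rule ccontr)
        assume "x \<notin> {x\<in>E. t < f x}"
        then have "f x \<le> t" using n by simp
        then have "f x < ennreal (q n)" using n by simp
        then show False using fless n by blast
      qed
    qed
    have "{x\<in>E. t < ennreal (q n) \<and> x \<notin> L' n} \<in> B" for n
    proof (cases "t < ennreal (q n)")
      case True
      then have "{x\<in>E. t < ennreal (q n) \<and> x \<notin> L' n} = E - L' n" by auto
      then show ?thesis using L'B sa.compl_sets by simp
    qed simp
    then show ?thesis unfolding eq by (rule sa.sets_Collect_countable_Ex)
  qed
  have key: "\<nu> A = Inf {t. 0 < t \<and> negligible_set E B \<nu> (A \<inter> {x\<in>E. t < f x})}"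
    if A: "A \<in> B" for A
  proof (rule antisym)
    show "\<nu> A \<le> Inf {t. 0 < t \<and> negligible_set E B \<nu> (A \<inter> {x\<in>E. t < f x})}"
    proof (rule Inf_greatest)
      fix t assume "t \<in> {t. 0 < t \<and> negligible_set E B \<nu> (A \<inter> {x\<in>E. t < f x})}"
      then obtain G where G: "G \<in> B" "A \<inter> {x\<in>E. t < f x} \<subseteq> G" "\<nu> G = 0"
        unfolding negligible_set_def by blast
      show "\<nu> A \<le> t"
      proof (rule dens[OF q])
        fix n assume tn: "t < ennreal (q n)"
        have "A \<subseteq> G \<union> L' n"
        proof
          fix x assume x: "x \<in> A"
          show "x \<in> G \<union> L' n"
          proof (cases "x \<in> G")
            case False
            then have "\<not> t < f x" using G x sa.sets_into_space[OF A] by blast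
            then have "f x < ennreal (q n)" using tn by (simp add: not_less)
            then show ?thesis using fless by blast
          qed simp
        qed
        then have "\<nu> A \<le> \<nu> (G \<union> L' n)" using nu_mono[OF sm A] G L'B by blast
        also have "\<dots> = max (\<nu> G) (\<nu> (L' n))" using nu_max[OF sm] G L'B by blast
        also have "\<dots> \<le> ennreal (q n)" using G L'nu by simp
        finally show "\<nu> A \<le> ennreal (q n)" .
      qed
    qed
    show "Inf {t. 0 < t \<and> negligible_set E B \<nu> (A \<inter> {x\<in>E. t < f x})} \<le> \<nu> A"
    proof (rule dens[OF q])
      fix n assume nA: "\<nu> A < ennreal (q n)"
      have "negligible_set E B \<nu> (A - L' n)" using negL'[OF A] nA by simp
      moreover have "A \<inter> {x\<in>E. ennreal (q n) < f x} \<subseteq> A - L' n"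
      proof
        fix x assume x: "x \<in> A \<inter> {x\<in>E. ennreal (q n) < f x}"
        have "x \<notin> L' n"
        proof
          assume "x \<in> L' n"
          then have "f x \<le> ennreal (q n)" by (rule fle)
          then show False using x by (simp add: not_less[symmetric])
        qed
        then show "x \<in> A - L' n" using x by blast
      qed
      ultimately have "negligible_set E B \<nu> (A \<inter> {x\<in>E. ennreal (q n) < f x})"
        by (rule negl_subset)
      moreover have "0 < ennreal (q n)" using qpos[of n] by simp
      ultimately show "Inf {t. 0 < t \<and> negligible_set E B \<nu> (A \<inter> {x\<in>E. t < f x})} \<le> ennreal (q n)"
        by (intro Inf_lower) blast
    qed
  qed
  have auto: "autocontinuous E B \<nu>"
    unfolding autocontinuous_def using fmeas key by blast
  moreover have "completely_maxitive B \<nu> \<and> has_cardinal_density E B \<nu>"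
    if hN: "\<forall>N. negligible_set E B \<nu> N \<longrightarrow> N = {}"
  proof -
    have negiff: "negligible_set E B \<nu> N \<longleftrightarrow> N = {}" for N
      using hN nu0 unfolding negligible_set_def by blast
    have cd: "\<nu> A = (SUP x\<in>A. f x)" if A: "A \<in> B" for A
    proof -
      let ?s = "SUP x\<in>A. f x"
      have "A \<inter> {x\<in>E. t < f x} = {} \<longleftrightarrow> ?s \<le> t" for t
        using sa.sets_into_space[OF A] by (auto simp: SUP_le_iff not_less)
      then have "\<nu> A = Inf {t. 0 < t \<and> ?s \<le> t}" using key[OF A] negiff by simp
      also have "\<dots> = ?s"
      proof (rule antisym)
        show "?s \<le> Inf {t. 0 < t \<and> ?s \<le> t}" by (rule Inf_greatest) blast
        show "Inf {t. 0 < t \<and> ?s \<le> t} \<le> ?s"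
        proof (rule dens[OF q])
          fix n assume "?s < ennreal (q n)"
          moreover have "0 < ennreal (q n)" using qpos[of n] by simp
          ultimately show "Inf {t. 0 < t \<and> ?s \<le> t} \<le> ennreal (q n)"
            by (intro Inf_lower) simp
        qed
      qed
      finally show ?thesis .
    qed
    have "has_cardinal_density E B \<nu>" unfolding has_cardinal_density_def using cd by blast
    moreover have "completely_maxitive B \<nu>"
      unfolding completely_maxitive_def
    proof (intro allI impI)
      fix F assume F: "F \<subseteq> B" "\<Union>F \<in> B"
      have "\<nu> (\<Union>F) = (SUP x\<in>\<Union>F. f x)" using cd F by blast
      also have "\<dots> = (SUP A\<in>F. SUP x\<in>A. f x)" using SUP_UNION[of f "\<lambda>A. A" F] by simp
      also have "\<dots> = (SUP A\<in>F. \<nu> A)" using cd F by (intro SUP_cong) auto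
      finally show "\<nu> (\<Union>F) = (SUP A\<in>F. \<nu> A)" .
    qed
    ultimately show ?thesis by blast
  qed
  ultimately show ?thesis by blast
qed

end
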